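(* Let $m\ge 2$ be an integer, let $z_1,z_2,\dots$ be i.i.d. standard normal random variables, let $I_1,\dots,I_m$ be positive integers, and set $N_1=I_1$, $N_i=N_{i-1}+I_i$ for $i>1$. Let $r_1,\dots,r_m>0$ and define the events $\zeta_i=\{\sum_{j=1}^{N_i} z_j^2>r_i^2\}$, $i=1,\dots,m$. For parameters $u_1^m=(u_1,\dots,u_m)$ with $0\le u_i<1/2$, define recursively $$h_1=u_1,\qquad h_i=h_{i-1}+u_i(1-2h_{i-1}),$$ $$g_1=e^{-u_1 r_m^2}(1-2u_1)^{-I_m/2},\qquad g_i=g_{i-1}\,e^{-u_i(1-2h_{i-1})r_{m-i+1}^2}\,(1-2h_i)^{-I_{m-i+1}/2}.$$ Then $$\Pr\left(\bigcap_{i=1}^m\zeta_i\right)\ge\max\left(0,\ \Pr\left(\bigcap_{i=2}^m\zeta_i\right)-\inf_{u_1^m}\frac{g_{m-1}(u_1^m)\,\Pr\left(\chi^2_{I_1}\le(1-2h_{m-1})r_1^2\right)}{(1-2h_{m-1})^{I_1/2}}\right),$$ the infimum being over all $u_1^m$ with $0\le u_i<1/2$ for all $i$.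
   Context: For a positive integer $k$, $\chi^2_k$ denotes a random variable with the central chi-square distribution with $k$ degrees of freedom. *)

theory Defs
  imports "HOL-Probability.Probability"
begin

definition chi2_density :: "nat \<Rightarrow> real \<Rightarrow> real" where
  "chi2_density k x =
     (if x > 0 then x powr (real k / 2 - 1) * exp (- x / 2) / (2 powr (real k / 2) * Gamma (real k / 2))
      else 0)"

definition chi2_cdf :: "nat \<Rightarrow> real \<Rightarrow> real" where
  "chi2_cdf k x = measure (density lborel (\<lambda>t. ennreal (chi2_density k t))) {..x}"

(* h_0 = 0, h_i = h_{i-1} + u_i (1 - 2 h_{i-1});  gives h_1 = u_1 *)
primrec hseq :: "(nat \<Rightarrow> real) \<Rightarrow> nat \<Rightarrow> real" where
  "hseq u 0 = 0"
| "hseq u (Suc i) = hseq u i + u (Suc i) * (1 - 2 * hseq u i)"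

(* g_0 = 1, g_i = g_{i-1} exp(-u_i (1-2h_{i-1}) r_{m-i+1}^2) (1-2h_i)^(-I_{m-i+1}/2);
   gives g_1 = exp(-u_1 r_m^2) (1-2u_1)^(-I_m/2) *)
primrec gseq :: "nat \<Rightarrow> (nat \<Rightarrow> nat) \<Rightarrow> (nat \<Rightarrow> real) \<Rightarrow> (nat \<Rightarrow> real) \<Rightarrow> nat \<Rightarrow> real" where
  "gseq m I r u 0 = 1"
| "gseq m I r u (Suc i) =
     gseq m I r u i * exp (- u (Suc i) * (1 - 2 * hseq u i) * (r (m - Suc i + 1))\<^sup>2)
       * (1 - 2 * hseq u (Suc i)) powr (- real (I (m - Suc i + 1)) / 2)"

end

theory Submission
  imports Defs
begin

lemma chi2_density_nonneg: "0 \<le> chi2_density k x"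
proof (cases "k = 0")
  case True then show ?thesis by (simp add: chi2_density_def)
next
  case False then show ?thesis unfolding chi2_density_def
  by (auto intro!: divide_nonneg_nonneg mult_nonneg_nonneg Gamma_real_nonneg)
qed

lemma chi2_density_nonpos[simp]: "x \<le> 0 \<Longrightarrow> chi2_density k x = 0"
  unfolding chi2_density_def by auto

lemma chi2_density_measurable[measurable]: "chi2_density k \<in> borel_measurable borel"
  unfolding chi2_density_def by measurable

lemma chi2_1_sq:
  assumes "x > 0"
  shows "chi2_density 1 (x\<^sup>2) * (2 * x) = 2 * std_normal_density x"
proof -
  have "(x\<^sup>2) powr (real 1 / 2 - 1) = (x powr 2) powr (-1/2)"
    using assms by (simp add: powr_realpow)
  also have "\<dots> = x powr (-1)" by (simp add: powr_powr)
  also have "\<dots> = 1 / x" using assms by (simp add: powr_minus_divide)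
  finally have a: "(x\<^sup>2) powr (real 1 / 2 - 1) = 1 / x" .
  have b: "2 powr (real 1 / 2) * Gamma (real 1 / 2) = sqrt (2 * pi)"
    by (simp add: Gamma_one_half_real powr_half_sqrt real_sqrt_mult)
  have c: "x\<^sup>2 > 0" using assms by simp
  show ?thesis
    unfolding chi2_density_def std_normal_density_def if_P[OF c] a b
    using assms by (simp add: field_simps)
qed


lemma (in prob_space) sq_normal_chi2:
  assumes d: "distributed M lborel X std_normal_density"
  shows "distributed M lborel (\<lambda>\<omega>. (X \<omega>)\<^sup>2) (chi2_density 1)"
proof -
  have Xm[measurable]: "X \<in> borel_measurable M"
    using distributed_measurable[OF d] by simp
  have em: "\<And>A. A \<in> sets borel \<Longrightarrow> emeasure M (X -` A \<inter> space M) = (\<integral>\<^sup>+x. ennreal (std_normal_density x) * indicator A x \<partial>lborel)"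
    using distributed_emeasure[OF d] by simp
  have key: "(\<integral>\<^sup>+x. ennreal (chi2_density 1 x) * indicator {..a} x \<partial>lborel) = emeasure M {\<omega>\<in>space M. (X \<omega>)\<^sup>2 \<le> a}" for a
  proof (cases "a > 0")
    case False
    have "(\<integral>\<^sup>+x. ennreal (chi2_density 1 x) * indicator {..a} x \<partial>lborel) = (\<integral>\<^sup>+(x::real). 0 \<partial>lborel)"
      using False by (intro nn_integral_cong) (auto simp: indicator_def)
    moreover have "emeasure M {\<omega>\<in>space M. (X \<omega>)\<^sup>2 \<le> a} = 0"
    proof -
      have "emeasure M {\<omega>\<in>space M. (X \<omega>)\<^sup>2 \<le> a} \<le> emeasure M (X -` {0} \<inter> space M)"
        using False by (intro emeasure_mono) (auto, smt (verit) zero_le_power2 power_eq_0_iff)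
      also have "\<dots> = (\<integral>\<^sup>+x. ennreal (std_normal_density x) * indicator {0} x \<partial>lborel)"
        by (rule em) simp
      also have "\<dots> = (\<integral>\<^sup>+(x::real). 0 \<partial>lborel)"
        by (intro nn_integral_cong_AE, use AE_lborel_singleton[of 0] in eventually_elim) auto
      finally show ?thesis by simp
    qed
    ultimately show ?thesis by simp
  next
    case True
    define b where "b = sqrt a"
    have b: "b > 0" "b\<^sup>2 = a" using True by (auto simp: b_def)
    have set: "{\<omega>\<in>space M. (X \<omega>)\<^sup>2 \<le> a} = X -` {-b..b} \<inter> space M"
      using b by (auto simp: abs_le_square_iff[symmetric] abs_le_iff) 
    have e: "\<And>x. x > 0 \<Longrightarrow> ennreal (chi2_density (Suc 0) (x\<^sup>2) * (2 * x)) = 2 * ennreal (std_normal_density x)"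
      by (subst chi2_1_sq[unfolded One_nat_def]) (auto simp: ennreal_mult)
    have 1: "(\<integral>\<^sup>+x. ennreal (std_normal_density x) * indicator {-b..b} x \<partial>lborel) =
       (\<integral>\<^sup>+x. ennreal (std_normal_density x) * indicator {-b..0} x \<partial>lborel) +
       (\<integral>\<^sup>+x. ennreal (std_normal_density x) * indicator {0<..b} x \<partial>lborel)"
      by (subst nn_integral_add[symmetric]) (auto intro!: nn_integral_cong simp: indicator_def)
    have 2: "(\<integral>\<^sup>+x. ennreal (std_normal_density x) * indicator {-b..0} x \<partial>lborel) =
       (\<integral>\<^sup>+x. ennreal (std_normal_density x) * indicator {0..b} x \<partial>lborel)"
      by (subst nn_integral_real_affine[where c="-1" and t=0]) 
         (auto intro!: nn_integral_cong simp: indicator_def std_normal_density_def)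
    have 3: "(\<integral>\<^sup>+x. ennreal (std_normal_density x) * indicator {0..b} x \<partial>lborel) =
       (\<integral>\<^sup>+x. ennreal (std_normal_density x) * indicator {0<..b} x \<partial>lborel)"
      by (intro nn_integral_cong_AE, use AE_lborel_singleton[of 0] in eventually_elim) 
         (auto simp: indicator_def)
    have 4: "(\<integral>\<^sup>+x. ennreal (chi2_density 1 x) * indicator {..a} x \<partial>lborel) =
       (\<integral>\<^sup>+x. chi2_density 1 x * indicator {(\<lambda>x. x\<^sup>2) 0..(\<lambda>x. x\<^sup>2) b} x \<partial>lborel)"
      using b by (intro nn_integral_cong) (auto simp: indicator_def)
    also have "\<dots> = (\<integral>\<^sup>+x. chi2_density 1 (x\<^sup>2) * (2 * x) * indicator {0..b} x \<partial>lborel)"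
      using b
      by (intro nn_integral_substitution) (auto simp: set_borel_measurable_def intro!: derivative_eq_intros continuous_intros)
    also have "\<dots> = (\<integral>\<^sup>+x. 2 * (ennreal (std_normal_density x) * indicator {0<..b} x) \<partial>lborel)"
      by (intro nn_integral_cong) 
        (auto simp: indicator_def e)
    also have "\<dots> = 2 * (\<integral>\<^sup>+x. ennreal (std_normal_density x) * indicator {0<..b} x \<partial>lborel)"
      by (rule nn_integral_cmult) simp
    finally show ?thesis
      unfolding set em[of "{-b..b}", OF atLeastAtMost_borel]
      unfolding 1 2 3 by (simp add: mult_2)
  qed
  have ind: "\<And>a x. ennreal (chi2_density 1 x * indicator {..a} x) = ennreal (chi2_density 1 x) * indicator {..a} x"
    by (simp add: indicator_def)
  have key2: "\<And>a. (\<integral>\<^sup>+x. ennreal (chi2_density 1 x * indicator {..a} x) \<partial>lborel) = ennreal (measure M {\<omega>\<in>space M. (X \<omega>)\<^sup>2 \<le> a})"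
    unfolding ind using key emeasure_eq_measure by metis
  show ?thesis
    by (rule distributedI_borel_atMost[OF _ _ _ key2]) (auto simp: chi2_density_nonneg emeasure_eq_measure)
qed


lemma conv_pointwise:
  assumes x: "x > 0" and k: "k > 0"
  defines "a \<equiv> real k / 2"
  defines "Q \<equiv> x powr (a - 1/2 - 1) * exp (- x / 2) / ((2 powr (1/2) * Gamma (1/2)) * (2 powr a * Gamma a))"
  shows "chi2_density 1 (x - x * t) * chi2_density k (x * t) =
         Q * (t powr (a - 1) * (1 - t) powr (1/2 - 1) * indicator {0..1} t)"
proof (cases "0 < t \<and> t < 1")
  case True
  have t: "0 < t" "t < 1" using True by auto
  have p1: "(x - x * t) > 0" using x t by (simp add: algebra_simps)
  have p2: "x * t > 0" using x t by simp
  have e1: "(x - x * t) powr (real 1 / 2 - 1) = x powr (- 1/2) * (1 - t) powr (1/2 - 1)"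
    using x t by (simp add: powr_mult[symmetric] algebra_simps)
  have e2: "(x * t) powr (a - 1) = x powr (a - 1) * t powr (a - 1)"
    using x t by (simp add: powr_mult)
  have e3: "x powr (- 1/2) * x powr (a - 1) = x powr (a - 1/2 - 1)"
    using x by (simp add: powr_add[symmetric])
  have e4: "exp (- (x - x * t) / 2) * exp (- (x * t) / 2) = exp (- x / 2)"
    by (simp add: exp_add[symmetric] field_simps)
  show ?thesis
    unfolding chi2_density_def if_P[OF p1] if_P[OF p2] a_def[symmetric] Q_def
    using t e1 e2 e3 e4
    by (simp add: indicator_def field_simps)
next
  case False
  then have "t \<le> 0 \<or> 1 \<le> t" by auto
  then show ?thesis
  proof
    assume "t \<le> 0"
    then have "x * t \<le> 0" using x by (simp add: mult_nonneg_nonpos)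
    moreover have "t powr (a - 1) * (1 - t) powr (1/2 - 1) * indicator {0..1} t = 0"
      using \<open>t \<le> 0\<close> by (cases "t = 0") (auto simp: indicator_def)
    ultimately show ?thesis by simp
  next
    assume "1 \<le> t"
    then have "x - x * t \<le> 0" using x by (simp add: algebra_simps mult_le_cancel_left1)
    moreover have "t powr (a - 1) * (1 - t) powr (1/2 - 1) * indicator {0..1} t = 0"
      using \<open>1 \<le> t\<close> by (cases "t = 1") (auto simp: indicator_def)
    ultimately show ?thesis by simp
  qed
qed

lemma conv_chi2:
  assumes k: "k > 0"
  shows "(\<lambda>x. \<integral>\<^sup>+y. ennreal (chi2_density 1 (x - y)) * ennreal (chi2_density k y) \<partial>lborel)
         = (\<lambda>x. ennreal (chi2_density (Suc k) x))"
proof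
  fix x :: real
  show "(\<integral>\<^sup>+y. ennreal (chi2_density 1 (x - y)) * ennreal (chi2_density k y) \<partial>lborel)
         = ennreal (chi2_density (Suc k) x)"
  proof (cases "x > 0")
    case False
    have "(\<integral>\<^sup>+y. ennreal (chi2_density 1 (x - y)) * ennreal (chi2_density k y) \<partial>lborel) = (\<integral>\<^sup>+(y::real). 0 \<partial>lborel)"
    proof (intro nn_integral_cong)
      fix y :: real
      show "ennreal (chi2_density 1 (x - y)) * ennreal (chi2_density k y) = 0"
        using False by (cases "y \<le> 0") auto
    qed
    then show ?thesis using False by simp
  next
    case x: True
    define a where "a = real k / 2"
    define Q where "Q = x powr (a - 1/2 - 1) * exp (- x / 2) / ((2 powr (1/2) * Gamma (1/2)) * (2 powr a * Gamma a))"
    have a: "a > 0" using k by (simp add: a_def)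
    have Qnn: "Q \<ge> 0" using a unfolding Q_def by (auto intro!: divide_nonneg_nonneg mult_nonneg_nonneg Gamma_real_nonneg)
    have "(\<integral>\<^sup>+y. ennreal (chi2_density 1 (x - y)) * ennreal (chi2_density k y) \<partial>lborel)
        = (\<integral>\<^sup>+y. ennreal (chi2_density 1 (x - y) * chi2_density k y) \<partial>lborel)"
      by (intro nn_integral_cong) (simp add: ennreal_mult chi2_density_nonneg)
    also have "\<dots> = ennreal x * (\<integral>\<^sup>+t. ennreal (chi2_density 1 (x - (0 + x * t)) * chi2_density k (0 + x * t)) \<partial>lborel)"
      using x by (subst nn_integral_real_affine[where c=x and t=0]) auto
    also have "\<dots> = ennreal x * (\<integral>\<^sup>+t. ennreal Q * (ennreal (t powr (a - 1) * (1 - t) powr (1/2 - 1)) * indicator {0..1} t) \<partial>lborel)"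
    proof (intro arg_cong2[where f="(*)"] refl nn_integral_cong)
      fix t :: real
      have "chi2_density 1 (x - (0 + x * t)) * chi2_density k (0 + x * t) = Q * (t powr (a - 1) * (1 - t) powr (1/2 - 1) * indicator {0..1} t)"
        using conv_pointwise[OF x k] unfolding a_def Q_def by simp
      moreover have "ennreal (Q * (t powr (a - 1) * (1 - t) powr (1/2 - 1) * indicator {0..1} t))
          = ennreal Q * ennreal (t powr (a - 1) * (1 - t) powr (1/2 - 1) * indicator {0..1} t)"
        by (rule ennreal_mult) (use Qnn in auto)
      moreover have "ennreal (t powr (a - 1) * (1 - t) powr (1/2 - 1) * indicator {0..1} t)
          = ennreal (t powr (a - 1) * (1 - t) powr (1/2 - 1)) * indicator {0..1} t"
        by (simp add: indicator_def)
      ultimately show "ennreal (chi2_density 1 (x - (0 + x * t)) * chi2_density k (0 + x * t)) =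
         ennreal Q * (ennreal (t powr (a - 1) * (1 - t) powr (1/2 - 1)) * indicator {0..1} t)"
        by simp
    qed
    also have "\<dots> = ennreal x * (ennreal Q * (\<integral>\<^sup>+t. ennreal (t powr (a - 1) * (1 - t) powr (1/2 - 1)) * indicator {0..1} t \<partial>lborel))"
      by (subst nn_integral_cmult) auto
    also have "(\<integral>\<^sup>+t. ennreal (t powr (a - 1) * (1 - t) powr (1/2 - 1)) * indicator {0..1} t \<partial>lborel) = ennreal (Beta a (1/2))"
      by (rule nn_integral_has_integral_lebesgue'[OF _ has_integral_Beta_real[OF a]]) auto
    also have "ennreal x * (ennreal Q * ennreal (Beta a (1/2))) = ennreal (x * Q * Beta a (1/2))"
    proof -
      have Bnn: "Beta a (1/2) \<ge> 0"
        using a by (simp add: Beta_altdef rGamma_inverse_Gamma Gamma_real_pos less_imp_le)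
      show ?thesis using x Qnn Bnn by (simp add: ennreal_mult mult.assoc)
    qed
    also have "x * Q * Beta a (1/2) = chi2_density (Suc k) x"
    proof -
      have G: "Gamma a * Gamma (1/2) = Beta a (1/2) * Gamma (a + 1/2)"
        by (rule Gamma_Gamma_Beta) (use a in \<open>auto elim!: nonpos_Ints_cases\<close>)
      have Gpos: "Gamma a > 0" "Gamma (1/2::real) > 0" "Gamma (a + 1/2) > 0"
        using a by (auto intro!: Gamma_real_pos)
      have s: "real (Suc k) / 2 = a + 1/2" by (simp add: a_def field_simps)
      have px: "x * x powr (a - 1/2 - 1) = x powr (a + 1/2 - 1)"
        using x by (simp add: powr_add[symmetric] powr_mult_base)
      have p2: "2 powr (1/2) * 2 powr a = (2::real) powr (a + 1/2)"
        by (simp add: powr_add[symmetric] add.commute)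
      have B: "Beta a (1/2) = Gamma a * Gamma (1/2) / Gamma (a + 1/2)"
        using G Gpos by (simp add: field_simps)
      show ?thesis
        unfolding chi2_density_def if_P[OF x] s Q_def B
        using Gpos px[symmetric] p2[symmetric]
        by (simp add: field_simps Gamma_one_half_real)
    qed
    finally show ?thesis .
  qed
qed


lemma (in prob_space) chi2_sum:
  assumes "finite J" "J \<noteq> {}" "indep_vars (\<lambda>_. borel) X J"
    and "\<And>j. j \<in> J \<Longrightarrow> distributed M lborel (X j) std_normal_density"
  shows "distributed M lborel (\<lambda>\<omega>. \<Sum>j\<in>J. (X j \<omega>)\<^sup>2) (chi2_density (card J))"
  using assms
proof (induction J rule: finite_ne_induct)
  case (singleton j)
  then show ?case using sq_normal_chi2 by simp
next
  case (insert j J)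
  have indY: "indep_vars (\<lambda>_. borel) (\<lambda>i \<omega>. (X i \<omega>)\<^sup>2) (insert j J)"
    by (rule indep_vars_compose2[OF insert.prems(1)]) simp
  have ind: "indep_var borel (\<lambda>\<omega>. (X j \<omega>)\<^sup>2) borel (\<lambda>\<omega>. \<Sum>i\<in>J. (X i \<omega>)\<^sup>2)"
    using indep_vars_sum[OF insert.hyps(1,3) indY] .
  have IH: "distributed M lborel (\<lambda>\<omega>. \<Sum>i\<in>J. (X i \<omega>)\<^sup>2) (chi2_density (card J))"
    using insert by (auto intro: indep_vars_subset)
  have "distributed M lborel (\<lambda>\<omega>. (X j \<omega>)\<^sup>2 + (\<Sum>i\<in>J. (X i \<omega>)\<^sup>2))
      (\<lambda>x. \<integral>\<^sup>+y. ennreal (chi2_density 1 (x - y)) * ennreal (chi2_density (card J) y) \<partial>lborel)"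
    by (rule distributed_convolution[OF ind sq_normal_chi2 IH]) (use insert in auto)
  also have "(\<lambda>x. \<integral>\<^sup>+y. ennreal (chi2_density 1 (x - y)) * ennreal (chi2_density (card J) y) \<partial>lborel)
      = (\<lambda>x. ennreal (chi2_density (card (insert j J)) x))"
  proof -
    have "card J > 0" using insert by (simp add: card_gt_0_iff)
    then show ?thesis using insert by (simp only: conv_chi2) simp
  qed
  finally show ?case using insert by simp
qed


lemma chi2_tilt:
  assumes s: "s > 0"
  shows "chi2_density k x * exp ((1 - s) / 2 * x) = s powr (- real k / 2) * (s * chi2_density k (s * x))"
proof (cases "x > 0")
  case False
  then have "s * x \<le> 0" using s by (simp add: mult_nonneg_nonpos)
  then show ?thesis using False by simp
next
  case True
  have sx: "s * x > 0" using s True by simp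
  have e1: "(s * x) powr (real k / 2 - 1) = s powr (real k / 2 - 1) * x powr (real k / 2 - 1)"
    using s True by (simp add: powr_mult)
  have e2: "s powr (- real k / 2) * (s * s powr (real k / 2 - 1)) = 1"
    using s by (simp add: powr_add[symmetric] powr_mult_base)
  have e3: "exp (- x / 2) * exp ((1 - s) / 2 * x) = exp (- (s * x) / 2)"
    by (simp add: exp_add[symmetric] field_simps)
  show ?thesis
    unfolding chi2_density_def if_P[OF True] if_P[OF sx] e1
    using e2 e3[symmetric]
    by (simp add: field_simps)
qed

lemma (in prob_space) chi2_tilt_integral:
  assumes T: "distributed M lborel T (chi2_density k)" and s: "s > 0"
    and AB: "\<And>x. (s * x \<in> B) = (x \<in> A)" and [measurable]: "A \<in> sets borel" "B \<in> sets borel"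
  shows "(\<integral>\<^sup>+\<omega>. ennreal (indicator A (T \<omega>) * exp ((1 - s) / 2 * T \<omega>)) \<partial>M)
       = ennreal (s powr (- real k / 2)) * emeasure (density lborel (chi2_density k)) B"
proof -
  have "(\<integral>\<^sup>+\<omega>. ennreal (indicator A (T \<omega>) * exp ((1 - s) / 2 * T \<omega>)) \<partial>M)
      = (\<integral>\<^sup>+x. ennreal (chi2_density k x) * ennreal (indicator A x * exp ((1 - s) / 2 * x)) \<partial>lborel)"
    by (rule distributed_nn_integral[OF T, symmetric]) simp
  also have "\<dots> = (\<integral>\<^sup>+x. ennreal (s powr (- real k / 2)) * ennreal (s * (chi2_density k (0 + s * x) * indicator B (0 + s * x))) \<partial>lborel)"
  proof (intro nn_integral_cong)
    fix x :: real
    have "chi2_density k x * (indicator A x * exp ((1 - s) / 2 * x))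
        = s powr (- real k / 2) * (s * (chi2_density k (0 + s * x) * indicator B (0 + s * x)))"
      using chi2_tilt[OF s, of k x] AB[of x] by (simp add: indicator_def)
    then show "ennreal (chi2_density k x) * ennreal (indicator A x * exp ((1 - s) / 2 * x))
      = ennreal (s powr (- real k / 2)) * ennreal (s * (chi2_density k (0 + s * x) * indicator B (0 + s * x)))"
      using s by (simp add: ennreal_mult[symmetric] chi2_density_nonneg)
  qed
  also have "\<dots> = ennreal (s powr (- real k / 2)) * (\<integral>\<^sup>+x. ennreal s * ennreal (chi2_density k (0 + s * x) * indicator B (0 + s * x)) \<partial>lborel)"
  proof -
    have eqx: "\<And>x. ennreal (s * (chi2_density k (0 + s * x) * indicator B (0 + s * x))) = ennreal s * ennreal (chi2_density k (0 + s * x) * indicator B (0 + s * x))"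
      using s by (intro ennreal_mult) (auto simp: chi2_density_nonneg)
    show ?thesis unfolding eqx by (subst nn_integral_cmult) auto
  qed
  also have "(\<integral>\<^sup>+x. ennreal s * ennreal (chi2_density k (0 + s * x) * indicator B (0 + s * x)) \<partial>lborel)
     = (\<integral>\<^sup>+x. ennreal (chi2_density k x * indicator B x) \<partial>lborel)"
    using s by (subst nn_integral_real_affine[where c=s and t=0]) (auto simp: nn_integral_cmult)
  also have "\<dots> = emeasure (density lborel (chi2_density k)) B"
    by (subst emeasure_density) (auto intro!: nn_integral_cong simp: indicator_def)
  finally show ?thesis .
qed

lemma (in prob_space) chi2_mgf:
  assumes T: "distributed M lborel T (chi2_density k)" and c: "c < 1/2"
  shows "(\<integral>\<^sup>+\<omega>. ennreal (exp (c * T \<omega>)) \<partial>M) = ennreal ((1 - 2 * c) powr (- real k / 2))"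
proof -
  have s: "1 - 2 * c > 0" using c by simp
  have d: "distr M lborel T = density lborel (chi2_density k)"
    using distributed_distr_eq_density[OF T] .
  have Tm: "T \<in> measurable M lborel" using distributed_measurable[OF T] .
  have sp: "emeasure (density lborel (chi2_density k)) UNIV = 1"
    using Tm unfolding d[symmetric] by (simp add: emeasure_distr emeasure_space_1)
  have "(\<integral>\<^sup>+\<omega>. ennreal (indicator UNIV (T \<omega>) * exp ((1 - (1 - 2 * c)) / 2 * T \<omega>)) \<partial>M)
     = ennreal ((1 - 2 * c) powr (- real k / 2)) * emeasure (density lborel (chi2_density k)) UNIV"
    by (rule chi2_tilt_integral[OF T s]) auto
  then show ?thesis using sp by simp
qed

lemma (in prob_space) chi2_mgf_trunc:
  assumes T: "distributed M lborel T (chi2_density k)" and c: "c < 1/2"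
  shows "(\<integral>\<^sup>+\<omega>. ennreal (indicator {..a} (T \<omega>) * exp (c * T \<omega>)) \<partial>M)
     = ennreal ((1 - 2 * c) powr (- real k / 2) * chi2_cdf k ((1 - 2 * c) * a))"
proof -
  have s: "1 - 2 * c > 0" using c by simp
  have d: "distr M lborel T = density lborel (chi2_density k)"
    using distributed_distr_eq_density[OF T] .
  have Tm: "T \<in> measurable M lborel" using distributed_measurable[OF T] .
  interpret D: prob_space "density lborel (chi2_density k)"
    unfolding d[symmetric] by (rule prob_space_distr[OF Tm])
  have "(\<integral>\<^sup>+\<omega>. ennreal (indicator {..a} (T \<omega>) * exp ((1 - (1 - 2 * c)) / 2 * T \<omega>)) \<partial>M)
     = ennreal ((1 - 2 * c) powr (- real k / 2)) * emeasure (density lborel (chi2_density k)) {..(1 - 2 * c) * a}"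
    by (rule chi2_tilt_integral[OF T s]) (use s in \<open>auto simp: mult_le_cancel_left_pos\<close>)
  also have "emeasure (density lborel (chi2_density k)) {..(1 - 2 * c) * a} = ennreal (chi2_cdf k ((1 - 2 * c) * a))"
    unfolding chi2_cdf_def by (rule D.emeasure_eq_measure)
  moreover have "chi2_cdf k ((1 - 2 * c) * a) \<ge> 0" by (simp add: chi2_cdf_def)
  ultimately show ?thesis by (simp add: ennreal_mult)
qed


lemma hseq_bounds:
  assumes "\<forall>i\<in>{1..n}. 0 \<le> u i \<and> u i < 1/2"
  shows "0 \<le> hseq u n \<and> 0 < 1 - 2 * hseq u n"
  using assms
proof (induction n)
  case 0 then show ?case by simp
next
  case (Suc n)
  then have h: "0 \<le> hseq u n" "0 < 1 - 2 * hseq u n" by auto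
  have u: "0 \<le> u (Suc n)" "u (Suc n) < 1/2" using Suc.prems by auto
  have "1 - 2 * hseq u (Suc n) = (1 - 2 * hseq u n) * (1 - 2 * u (Suc n))"
    by (simp add: algebra_simps)
  moreover have "(1 - 2 * hseq u n) * (1 - 2 * u (Suc n)) > 0" using h u by simp
  moreover have "hseq u (Suc n) \<ge> hseq u n" using h u by simp
  ultimately show ?case using h by simp
qed

lemma gseq_closed:
  "gseq m I r u n = exp (- (\<Sum>j=1..n. u j * (1 - 2 * hseq u (j - 1)) * (r (m - j + 1))\<^sup>2))
      * (\<Prod>j=1..n. (1 - 2 * hseq u j) powr (- real (I (m - j + 1)) / 2))"
proof (induction n)
  case 0 then show ?case by simp
next
  case (Suc n)
  show ?case
    by (simp add: Suc exp_add exp_diff exp_minus field_simps)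
qed

lemma abel_sum:
  fixes T c :: "nat \<Rightarrow> real"
  shows "(\<Sum>i=2..m. (c i - c (Suc i)) * (\<Sum>l=1..i. T l)) = (\<Sum>l=1..m. (c (max 2 l) - c (Suc m)) * T l)"
proof (induction m)
  case 0 then show ?case by simp
next
  case (Suc m)
  show ?case
  proof (cases "m = 0")
    case True then show ?thesis by simp
  next
    case False
    then have m: "Suc m \<ge> 2" by simp
    have "(\<Sum>i=2..Suc m. (c i - c (Suc i)) * (\<Sum>l=1..i. T l))
      = (\<Sum>i=2..m. (c i - c (Suc i)) * (\<Sum>l=1..i. T l)) + (c (Suc m) - c (Suc (Suc m))) * (\<Sum>l=1..Suc m. T l)"
      using m by simp
    also have "\<dots> = (\<Sum>l=1..m. (c (max 2 l) - c (Suc m)) * T l) + (\<Sum>l=1..Suc m. (c (Suc m) - c (Suc (Suc m))) * T l)"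
      unfolding Suc.IH by (simp only: sum_distrib_left)
    also have "\<dots> = (\<Sum>l=1..m. (c (max 2 l) - c (Suc (Suc m))) * T l) + (c (Suc m) - c (Suc (Suc m))) * T (Suc m)"
      by (simp add: sum.distrib[symmetric] algebra_simps)
    also have "\<dots> = (\<Sum>l=1..Suc m. (c (max 2 l) - c (Suc (Suc m))) * T l)"
      using m by (simp add: max_def)
    finally show ?thesis .
  qed
qed

definition Nsum :: "(nat \<Rightarrow> nat) \<Rightarrow> nat \<Rightarrow> nat" where
  "Nsum I i = (\<Sum>k=1..i. I k)"

definition blk :: "(nat \<Rightarrow> nat) \<Rightarrow> nat \<Rightarrow> nat set" where
  "blk I l = {Nsum I (l - 1) + 1 .. Nsum I l}"

lemma Nsum_Suc: "Nsum I (Suc i) = Nsum I i + I (Suc i)"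
  by (simp add: Nsum_def)

lemma blk_Suc: "blk I (Suc i) = {Nsum I i + 1 .. Nsum I i + I (Suc i)}"
  by (simp add: blk_def Nsum_Suc)

lemma card_blk: "card (blk I l) = I l" if l: "l \<ge> 1"
proof -
  obtain i where "l = Suc i" using l by (cases l) auto
  then show ?thesis by (simp add: blk_Suc)
qed

lemma sum_blk: "(\<Sum>j=1..Nsum I i. f j) = (\<Sum>l=1..i. \<Sum>j\<in>blk I l. f j)"
proof (induction i)
  case 0 then show ?case by (simp add: Nsum_def)
next
  case (Suc i)
  have "(\<Sum>j=1..Nsum I (Suc i). f j) = (\<Sum>j=1..Nsum I i. f j) + (\<Sum>j=Nsum I i + 1..Nsum I i + I (Suc i). f j)"
    unfolding Nsum_Suc by (rule sum.ub_add_nat) simp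
  then show ?case using Suc by (simp add: blk_Suc)
qed

lemma Nsum_mono: "i \<le> j \<Longrightarrow> Nsum I i \<le> Nsum I j"
  unfolding Nsum_def by (rule sum_mono2) auto

lemma disjoint_blk: "disjoint_family_on (blk I) (S :: nat set)"
  unfolding disjoint_family_on_def
proof (intro ballI impI)
  fix a b :: nat assume "a \<noteq> b"
  have *: "blk I a \<inter> blk I b = {}" if "a < b" for a b
  proof -
    have "Nsum I a \<le> Nsum I (b - 1)" using that by (intro Nsum_mono) simp
    then show ?thesis unfolding blk_def
      using that by (cases a) auto
  qed
  show "blk I a \<inter> blk I b = {}"
    using *[of a b] *[of b a] \<open>a \<noteq> b\<close> by (cases "a < b") auto
qed


lemma (in prob_space) main_bound:
  fixes z :: "nat \<Rightarrow> 'a \<Rightarrow> real" and m :: nat and I :: "nat \<Rightarrow> nat" and r u :: "nat \<Rightarrow> real"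
  assumes indz: "indep_vars (\<lambda>_. borel) z UNIV"
    and dz: "\<And>j. distributed M lborel (z j) std_normal_density"
    and m: "m \<ge> 2"
    and Ipos: "\<And>i. i \<in> {1..m} \<Longrightarrow> I i > 0"
    and u: "\<forall>i\<in>{1..m}. 0 \<le> u i \<and> u i < 1/2"
  defines "\<zeta> \<equiv> (\<lambda>i. {\<omega> \<in> space M. (\<Sum>j=1..(\<Sum>k=1..i. I k). (z j \<omega>)\<^sup>2) > (r i)\<^sup>2})"
  shows "prob (\<Inter>i\<in>{2..m}. \<zeta> i) - prob (\<Inter>i\<in>{1..m}. \<zeta> i) \<le>
     gseq m I r u (m - 1) * chi2_cdf (I 1) ((1 - 2 * hseq u (m - 1)) * (r 1)\<^sup>2)
       / (1 - 2 * hseq u (m - 1)) powr (real (I 1) / 2)"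
proof -
  have zm[measurable]: "z j \<in> borel_measurable M" for j
    using distributed_measurable[OF dz[of j]] by simp
  define T where "T = (\<lambda>l \<omega>. \<Sum>j\<in>blk I l. (z j \<omega>)\<^sup>2)"
  define S where "S = (\<lambda>i \<omega>. \<Sum>j=1..Nsum I i. (z j \<omega>)\<^sup>2)"
  have ST: "S i \<omega> = (\<Sum>l=1..i. T l \<omega>)" for i \<omega>
    unfolding S_def T_def by (rule sum_blk)
  have \<zeta>S: "\<zeta> i = {\<omega>\<in>space M. S i \<omega> > (r i)\<^sup>2}" for i
    unfolding \<zeta>_def S_def Nsum_def by simp
  have Tm[measurable]: "T l \<in> borel_measurable M" for l unfolding T_def by measurable
  have Sm[measurable]: "S i \<in> borel_measurable M" for i unfolding S_def by measurable
  have indT: "indep_vars (\<lambda>_. borel) T {1..m}"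
  proof -
    have "indep_vars (\<lambda>l. PiM (blk I l) (\<lambda>_. borel)) (\<lambda>l \<omega>. restrict (\<lambda>i. z i \<omega>) (blk I l)) {1..m}"
      by (rule indep_vars_restrict[OF indz]) (auto simp: disjoint_blk)
    then have "indep_vars (\<lambda>_. borel) (\<lambda>l \<omega>. (\<lambda>f. \<Sum>j\<in>blk I l. (f j)\<^sup>2) (restrict (\<lambda>i. z i \<omega>) (blk I l))) {1..m}"
      by (rule indep_vars_compose2) measurable
    moreover have "(\<lambda>l \<omega>. (\<lambda>f. \<Sum>j\<in>blk I l. (f j)\<^sup>2) (restrict (\<lambda>i. z i \<omega>) (blk I l))) = T"
      unfolding T_def by (intro ext sum.cong) auto
    ultimately show ?thesis by simp
  qed
  have distT: "distributed M lborel (T l) (chi2_density (I l))" if l: "l \<in> {1..m}" for l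
  proof -
    have fin: "finite (blk I l)" by (simp add: blk_def)
    have cb: "card (blk I l) = I l" using l by (intro card_blk) simp
    then have ne: "blk I l \<noteq> {}" using Ipos[OF l] by auto
    have "distributed M lborel (\<lambda>\<omega>. \<Sum>j\<in>blk I l. (z j \<omega>)\<^sup>2) (chi2_density (card (blk I l)))"
      by (rule chi2_sum[OF fin ne indep_vars_subset[OF indz]]) (auto simp: dz)
    then show ?thesis unfolding cb T_def by simp
  qed
  define h where "h = hseq u"
  have hb: "0 \<le> h j \<and> 0 < 1 - 2 * h j" if "j \<le> m" for j
    unfolding h_def using that u by (intro hseq_bounds) auto
  define c where "c = (\<lambda>l. h (m + 1 - max 2 l))"
  have c_lt: "c l < 1/2" for l
  proof -
    have "m + 1 - max 2 l \<le> m" by simp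
    then have "0 < 1 - 2 * h (m + 1 - max 2 l)" using hb by blast
    then show ?thesis unfolding c_def by simp
  qed
  have c_m1: "c (Suc m) = 0" using m by (simp add: c_def h_def)
  have c_max: "c (max 2 l) = c l" for l by (simp add: c_def)
  have v_nn: "c i - c (Suc i) \<ge> 0" if i: "i \<in> {2..m}" for i
  proof -
    have e1: "m + 1 - max 2 i = Suc (m - i)" "m + 1 - max 2 (Suc i) = m - i" using i by auto
    have "c i - c (Suc i) = u (Suc (m - i)) * (1 - 2 * h (m - i))"
      unfolding c_def e1 h_def by simp
    moreover have "0 \<le> u (Suc (m - i))" using u i by auto
    moreover have "0 < 1 - 2 * h (m - i)" using hb[of "m - i"] by simp
    ultimately show ?thesis by simp
  qed
  define A where "A = (\<Inter>i\<in>{2..m}. \<zeta> i)"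
  define B where "B = (\<Inter>i\<in>{1..m}. \<zeta> i)"
  have \<zeta>ev: "\<zeta> i \<in> events" for i unfolding \<zeta>S by measurable
  have Aev: "A \<in> events" unfolding A_def using m \<zeta>ev by (intro sets.finite_INT) auto
  have Bev: "B \<in> events" unfolding B_def using m \<zeta>ev by (intro sets.finite_INT) auto
  have BA: "B \<subseteq> A" unfolding A_def B_def by auto
  have diff: "prob A - prob B = prob (A - B)"
    using finite_measure_Diff[OF Aev Bev BA] by simp
  have AB: "A - B = {\<omega>\<in>space M. S 1 \<omega> \<le> (r 1)\<^sup>2 \<and> (\<forall>i\<in>{2..m}. S i \<omega> > (r i)\<^sup>2)}"
  proof -
    have "{1..m} = insert 1 {2..m}" using m by auto
    then show ?thesis unfolding A_def B_def \<zeta>S using m by auto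
  qed
  define K where "K = exp (- (\<Sum>i=2..m. (c i - c (Suc i)) * (r i)\<^sup>2))"
  define G where "G = (\<lambda>l x. (if l = 1 then indicator {..(r 1)\<^sup>2} x else 1) * exp (c l * x))"
  define F where "F = (\<lambda>\<omega>. indicator {..(r 1)\<^sup>2} (T 1 \<omega>) * (\<Prod>i\<in>{2..m}. exp ((c i - c (Suc i)) * (S i \<omega> - (r i)\<^sup>2))))"
  have G_nn: "0 \<le> G l x" for l x unfolding G_def by (auto simp: indicator_def)
  have Gm[measurable]: "G l \<in> borel_measurable borel" for l unfolding G_def by (cases "l = 1") auto
  have F_eq: "F \<omega> = K * (\<Prod>l\<in>{1..m}. G l (T l \<omega>))" for \<omega>
  proof -
    have "(\<Sum>i=2..m. (c i - c (Suc i)) * S i \<omega>) = (\<Sum>l=1..m. c l * T l \<omega>)"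
      unfolding ST abel_sum c_m1 c_max by simp
    then have "(\<Sum>i=2..m. (c i - c (Suc i)) * (S i \<omega> - (r i)\<^sup>2))
        = (\<Sum>l=1..m. c l * T l \<omega>) - (\<Sum>i=2..m. (c i - c (Suc i)) * (r i)\<^sup>2)"
      by (simp add: right_diff_distrib sum_subtractf)
    note eq = this
    have "(\<Prod>i\<in>{2..m}. exp ((c i - c (Suc i)) * (S i \<omega> - (r i)\<^sup>2)))
        = exp (\<Sum>i=2..m. (c i - c (Suc i)) * (S i \<omega> - (r i)\<^sup>2))"
      by (simp add: exp_sum)
    also have "\<dots> = exp ((\<Sum>l=1..m. c l * T l \<omega>) - (\<Sum>i=2..m. (c i - c (Suc i)) * (r i)\<^sup>2))"
      unfolding eq ..
    also have "\<dots> = K * exp (\<Sum>l=1..m. c l * T l \<omega>)"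
      unfolding K_def by (simp add: exp_diff exp_minus field_simps)
    also have "\<dots> = K * (\<Prod>l\<in>{1..m}. exp (c l * T l \<omega>))"
      by (simp add: exp_sum)
    finally have "(\<Prod>i\<in>{2..m}. exp ((c i - c (Suc i)) * (S i \<omega> - (r i)\<^sup>2)))
        = K * (\<Prod>l\<in>{1..m}. exp (c l * T l \<omega>))" .
    moreover have "(\<Prod>l\<in>{1..m}. G l (T l \<omega>)) = indicator {..(r 1)\<^sup>2} (T 1 \<omega>) * (\<Prod>l\<in>{1..m}. exp (c l * T l \<omega>))"
      unfolding G_def prod.distrib using m by (simp add: prod.delta)
    ultimately show ?thesis unfolding F_def by simp
  qed
  have "emeasure M (A - B) = (\<integral>\<^sup>+\<omega>. indicator (A - B) \<omega> \<partial>M)"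
    using Aev Bev by (simp add: nn_integral_indicator)
  also have "\<dots> \<le> (\<integral>\<^sup>+\<omega>. ennreal (F \<omega>) \<partial>M)"
  proof (intro nn_integral_mono)
    fix \<omega> assume \<omega>: "\<omega> \<in> space M"
    show "indicator (A - B) \<omega> \<le> ennreal (F \<omega>)"
    proof (cases "\<omega> \<in> A - B")
      case True
      then have s1: "S 1 \<omega> \<le> (r 1)\<^sup>2" and si: "\<And>i. i \<in> {2..m} \<Longrightarrow> S i \<omega> > (r i)\<^sup>2"
        unfolding AB by auto
      have T1: "T 1 \<omega> = S 1 \<omega>" using ST[of 1 \<omega>] by simp
      have "1 \<le> (\<Prod>i\<in>{2..m}. exp ((c i - c (Suc i)) * (S i \<omega> - (r i)\<^sup>2)))"
      proof (intro prod_ge_1)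
        fix i assume i: "i \<in> {2..m}"
        have "0 \<le> (c i - c (Suc i)) * (S i \<omega> - (r i)\<^sup>2)"
          using v_nn[OF i] si[OF i] by (intro mult_nonneg_nonneg) auto
        then show "1 \<le> exp ((c i - c (Suc i)) * (S i \<omega> - (r i)\<^sup>2))" by simp
      qed
      then have "1 \<le> F \<omega>" unfolding F_def using s1 T1 by simp
      then show ?thesis using True by simp
    next
      case False
      then show ?thesis by simp
    qed
  qed
  also have "(\<integral>\<^sup>+\<omega>. ennreal (F \<omega>) \<partial>M) = ennreal K * (\<integral>\<^sup>+\<omega>. ennreal (\<Prod>l\<in>{1..m}. G l (T l \<omega>)) \<partial>M)"
    unfolding F_eq
    by (subst nn_integral_cmult[symmetric]) (auto simp: K_def ennreal_mult prod_nonneg G_nn)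
  also have "(\<integral>\<^sup>+\<omega>. ennreal (\<Prod>l\<in>{1..m}. G l (T l \<omega>)) \<partial>M) = (\<Prod>l\<in>{1..m}. \<integral>\<^sup>+\<omega>. ennreal (G l (T l \<omega>)) \<partial>M)"
  proof -
    have indG: "indep_vars (\<lambda>_. borel) (\<lambda>l \<omega>. ennreal (G l (T l \<omega>))) {1..m}"
      by (rule indep_vars_compose2[OF indT]) simp
    have "(\<integral>\<^sup>+\<omega>. (\<Prod>l\<in>{1..m}. ennreal (G l (T l \<omega>))) \<partial>M) = (\<Prod>l\<in>{1..m}. \<integral>\<^sup>+\<omega>. ennreal (G l (T l \<omega>)) \<partial>M)"
      by (rule indep_vars_nn_integral[OF _ indG]) auto
    then show ?thesis using G_nn by (simp add: prod_ennreal)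
  qed
  also have "\<dots> = (\<Prod>l\<in>{1..m}. ennreal (if l = 1 then (1 - 2 * c 1) powr (- real (I 1) / 2) * chi2_cdf (I 1) ((1 - 2 * c 1) * (r 1)\<^sup>2)
                         else (1 - 2 * c l) powr (- real (I l) / 2)))"
  proof (intro prod.cong refl)
    fix l assume l: "l \<in> {1..m}"
    show "(\<integral>\<^sup>+\<omega>. ennreal (G l (T l \<omega>)) \<partial>M) = ennreal (if l = 1 then (1 - 2 * c 1) powr (- real (I 1) / 2) * chi2_cdf (I 1) ((1 - 2 * c 1) * (r 1)\<^sup>2)
                         else (1 - 2 * c l) powr (- real (I l) / 2))"
    proof (cases "l = 1")
      case True
      then show ?thesis unfolding G_def using chi2_mgf_trunc[OF distT[OF l] c_lt] by simp
    next
      case False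
      then show ?thesis unfolding G_def using chi2_mgf[OF distT[OF l] c_lt] by simp
    qed
  qed
  also have "\<dots> = ennreal (\<Prod>l\<in>{1..m}. (if l = 1 then (1 - 2 * c 1) powr (- real (I 1) / 2) * chi2_cdf (I 1) ((1 - 2 * c 1) * (r 1)\<^sup>2)
                         else (1 - 2 * c l) powr (- real (I l) / 2)))"
    by (rule prod_ennreal) (auto simp: chi2_cdf_def)
  finally have le1: "emeasure M (A - B) \<le> ennreal K * ennreal (\<Prod>l\<in>{1..m}. (if l = 1 then (1 - 2 * c 1) powr (- real (I 1) / 2) * chi2_cdf (I 1) ((1 - 2 * c 1) * (r 1)\<^sup>2)
                         else (1 - 2 * c l) powr (- real (I l) / 2)))" .
  define P where "P = (\<Prod>l\<in>{2..m}. (1 - 2 * c l) powr (- real (I l) / 2))"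
  have prodsplit: "(\<Prod>l\<in>{1..m}. (if l = 1 then (1 - 2 * c 1) powr (- real (I 1) / 2) * chi2_cdf (I 1) ((1 - 2 * c 1) * (r 1)\<^sup>2)
                         else (1 - 2 * c l) powr (- real (I l) / 2)))
     = (1 - 2 * c 1) powr (- real (I 1) / 2) * chi2_cdf (I 1) ((1 - 2 * c 1) * (r 1)\<^sup>2) * P"
  proof -
    have "{1..m} = insert 1 {2..m}" using m by auto
    then show ?thesis unfolding P_def by (simp add: prod.insert)
  qed
  have meas: "prob (A - B) \<le> K * ((1 - 2 * c 1) powr (- real (I 1) / 2) * chi2_cdf (I 1) ((1 - 2 * c 1) * (r 1)\<^sup>2) * P)"
  proof -
    have nn: "0 \<le> (1 - 2 * c 1) powr (- real (I 1) / 2) * chi2_cdf (I 1) ((1 - 2 * c 1) * (r 1)\<^sup>2) * P"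
      unfolding P_def by (auto simp: chi2_cdf_def intro!: mult_nonneg_nonneg prod_nonneg)
    have "ennreal (prob (A - B)) \<le> ennreal (K * ((1 - 2 * c 1) powr (- real (I 1) / 2) * chi2_cdf (I 1) ((1 - 2 * c 1) * (r 1)\<^sup>2) * P))"
      using le1 unfolding prodsplit emeasure_eq_measure using nn by (simp add: ennreal_mult K_def)
    then show ?thesis using nn by (simp add: K_def)
  qed
  have c1: "c 1 = hseq u (m - 1)" unfolding c_def h_def by simp
  have R1: "(\<Sum>j=1..m-1. u j * (1 - 2 * hseq u (j - 1)) * (r (m - j + 1))\<^sup>2) = (\<Sum>i=2..m. (c i - c (Suc i)) * (r i)\<^sup>2)"
  proof (rule sum.reindex_bij_witness[where j="\<lambda>a. m + 1 - a" and i="\<lambda>b. m + 1 - b"])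
    fix a assume a: "a \<in> {1..m-1}"
    have e1: "m + 1 - max 2 (m + 1 - a) = Suc (a - 1)" "m + 1 - max 2 (Suc (m + 1 - a)) = a - 1" using a m by auto
    show "(c (m + 1 - a) - c (Suc (m + 1 - a))) * (r (m + 1 - a))\<^sup>2 = u a * (1 - 2 * hseq u (a - 1)) * (r (m - a + 1))\<^sup>2"
    proof -
      obtain b where b: "a = Suc b" using a by (cases a) auto
      have hr: "m - a + 1 = m + 1 - a" using a by auto
      have "hseq u (Suc (a - 1)) - hseq u (a - 1) = u a * (1 - 2 * hseq u (a - 1))"
        using b by simp
      then have hc: "c (m + 1 - a) - c (Suc (m + 1 - a)) = u a * (1 - 2 * hseq u (a - 1))"
        unfolding c_def e1 h_def by simp
      show ?thesis by (simp only: hc hr)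
    qed
  qed auto
  have R2: "(\<Prod>j=1..m-1. (1 - 2 * hseq u j) powr (- real (I (m - j + 1)) / 2)) = P"
    unfolding P_def
  proof (rule prod.reindex_bij_witness[where j="\<lambda>a. m + 1 - a" and i="\<lambda>b. m + 1 - b"])
    fix a assume a: "a \<in> {1..m-1}"
    have e1: "m + 1 - max 2 (m + 1 - a) = a" using a m by auto
    show "(1 - 2 * c (m + 1 - a)) powr (- real (I (m + 1 - a)) / 2) = (1 - 2 * hseq u a) powr (- real (I (m - a + 1)) / 2)"
    proof -
      have hr: "m - a + 1 = m + 1 - a" using a by auto
      show ?thesis unfolding c_def e1 h_def hr ..
    qed
  qed auto
  have "gseq m I r u (m - 1) = K * P"
    unfolding gseq_closed R1 R2 K_def ..
  moreover have "(1 - 2 * c 1) powr (- real (I 1) / 2) = 1 / (1 - 2 * hseq u (m - 1)) powr (real (I 1) / 2)"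
    unfolding c1 by (simp add: powr_minus_divide)
  ultimately have "K * ((1 - 2 * c 1) powr (- real (I 1) / 2) * chi2_cdf (I 1) ((1 - 2 * c 1) * (r 1)\<^sup>2) * P)
     = gseq m I r u (m - 1) * chi2_cdf (I 1) ((1 - 2 * hseq u (m - 1)) * (r 1)\<^sup>2) / (1 - 2 * hseq u (m - 1)) powr (real (I 1) / 2)"
    unfolding c1 by simp
  then show ?thesis using meas diff unfolding A_def B_def by simp
qed


theorem corollary1:
  fixes M :: "'a measure" and z :: "nat \<Rightarrow> 'a \<Rightarrow> real"
    and m :: nat and I :: "nat \<Rightarrow> nat" and r :: "nat \<Rightarrow> real"
  assumes "prob_space M"
    and "prob_space.indep_vars M (\<lambda>_. borel) z UNIV"
    and "\<And>j. distributed M lborel (z j) std_normal_density"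
    and "m \<ge> 2"
    and "\<And>i. i \<in> {1..m} \<Longrightarrow> I i > 0"
    and "\<And>i. i \<in> {1..m} \<Longrightarrow> r i > 0"
  defines "\<zeta> \<equiv> (\<lambda>i. {\<omega> \<in> space M. (\<Sum>j=1..(\<Sum>k=1..i. I k). (z j \<omega>)\<^sup>2) > (r i)\<^sup>2})"
    and "U \<equiv> {u :: nat \<Rightarrow> real. \<forall>i\<in>{1..m}. 0 \<le> u i \<and> u i < 1/2}"
  shows "measure M (\<Inter>i\<in>{1..m}. \<zeta> i) \<ge>
           max 0 (measure M (\<Inter>i\<in>{2..m}. \<zeta> i)
             - (INF u\<in>U. gseq m I r u (m - 1)
                   * chi2_cdf (I 1) ((1 - 2 * hseq u (m - 1)) * (r 1)\<^sup>2)
                   / (1 - 2 * hseq u (m - 1)) powr (real (I 1) / 2)))"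
proof -
  interpret prob_space M by fact
  define V where "V = (\<lambda>u. gseq m I r u (m - 1)
                   * chi2_cdf (I 1) ((1 - 2 * hseq u (m - 1)) * (r 1)\<^sup>2)
                   / (1 - 2 * hseq u (m - 1)) powr (real (I 1) / 2))"
  have bound: "measure M (\<Inter>i\<in>{2..m}. \<zeta> i) - measure M (\<Inter>i\<in>{1..m}. \<zeta> i) \<le> V u" if "u \<in> U" for u
    unfolding \<zeta>_def V_def
    by (rule main_bound[OF assms(2) assms(3) assms(4) assms(5)]) (use that in \<open>auto simp: U_def\<close>)
  have Une: "U \<noteq> {}" unfolding U_def by (auto intro!: exI[of _ "\<lambda>_. 0"])
  have "measure M (\<Inter>i\<in>{2..m}. \<zeta> i) - measure M (\<Inter>i\<in>{1..m}. \<zeta> i) \<le> (INF u\<in>U. V u)"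
    by (rule cINF_greatest[OF Une bound])
  then show ?thesis unfolding V_def by simp
qed

end
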